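(* Let $C$ be a finite set of $m$ candidates, $N=\{1,\dots,n\}$ voters with weak orders over $C$, $k\le m$ a positive integer, $\mathbf w\in\mathbb N^m$ non-increasing and $\boldsymbol\alpha\in\mathbb R^k$ with $\alpha_1\ge\dots\ge\alpha_k\ge0$. Set $w_{m+1}=0$, $w'_r=w_r-w_{r+1}$. Consider the integer program (OWA-IP) with variables $x_{i,\ell,r}$ ($i\in N,\ell\in[k],r\in[m]$) and $y_c$ ($c\in C$): maximise $\sum_{i\in N}\sum_{\ell\in[k]}\sum_{r\in[m]}\alpha_\ell w'_r x_{i,\ell,r}$ subject to $\sum_{c\in C}y_c=k$; $\sum_{\ell\in[k]}x_{i,\ell,r}\le\sum_{c:\ \mathrm{rank}_i(c)\le r}y_c$ for all $i\in N,r\in[m]$; $x_{i,\ell,r}\in\{0,1\}$; $y_c\in\{0,1\}$. Then the optimal value of (OWA-IP) equals $\max_{W\subseteq C,|W|=k}\sum_{i\in N}\boldsymbol\alpha\big((w_{\mathrm{rank}_i(c)})_{c\in W}\big)$, and for every optimal solution $W=\{c:y_c=1\}$ is an optimal committee for the OWA-based rule defined by $\boldsymbol\alpha$ and $\mathbf w$.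
   Context: Ranks: a weak order partitions $C$ into indifference classes $A_1\succ\dots\succ A_r$; a candidate in $A_t$ has rank $t$ (rank 1 = most preferred). For $\mathbf x\in\mathbb R^k$, $\boldsymbol\alpha(\mathbf x)=\sum_j\alpha_jx_{\sigma(j)}$ where $x_{\sigma(1)}\ge\dots\ge x_{\sigma(k)}$. The OWA-based rule selects a size-$k$ committee maximising $\sum_i\boldsymbol\alpha((w_{\mathrm{rank}_i(c)})_{c\in W})$. *)

theory Defs
  imports Complex_Main "HOL-Library.Multiset"
begin

text \<open>A weak order over C: a complete (total) preorder on C.
  (c, d) \<in> R means c is weakly preferred to d.\<close>
definition weak_order :: "'c set \<Rightarrow> ('c \<times> 'c) set \<Rightarrow> bool" where
  "weak_order C R \<longleftrightarrow> R \<subseteq> C \<times> C \<and> refl_on C R \<and> trans R \<and> total_on C R"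

text \<open>Rank of c: index t of the indifference class A_t containing c
  (rank 1 = most preferred). It equals the number of distinct upper
  contour sets of candidates weakly preferred to c, i.e. the number of
  indifference classes A_1, ..., A_t weakly above c.\<close>
definition rank :: "'c set \<Rightarrow> ('c \<times> 'c) set \<Rightarrow> 'c \<Rightarrow> nat" where
  "rank C R c = card ((\<lambda>d. {e \<in> C. (e, d) \<in> R}) ` {d \<in> C. (d, c) \<in> R})"

definition owa :: "(nat \<Rightarrow> real) \<Rightarrow> 'c set \<Rightarrow> ('c \<Rightarrow> real) \<Rightarrow> real" where
  "owa \<alpha> W f = (let xs = rev (sorted_list_of_multiset (image_mset f (mset_set W)))
                 in \<Sum>j<card W. \<alpha> (Suc j) * xs ! j)"

definition owa_score ::
  "'c set \<Rightarrow> nat \<Rightarrow> (nat \<Rightarrow> ('c \<times> 'c) set) \<Rightarrow> (nat \<Rightarrow> nat) \<Rightarrow> (nat \<Rightarrow> real) \<Rightarrow> 'c set \<Rightarrow> real" where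
  "owa_score C n P w \<alpha> W = (\<Sum>i\<in>{1..n}. owa \<alpha> W (\<lambda>c. real (w (rank C (P i) c))))"

definition optimal_committee ::
  "'c set \<Rightarrow> nat \<Rightarrow> (nat \<Rightarrow> ('c \<times> 'c) set) \<Rightarrow> (nat \<Rightarrow> nat) \<Rightarrow> (nat \<Rightarrow> real) \<Rightarrow> nat \<Rightarrow> 'c set \<Rightarrow> bool" where
  "optimal_committee C n P w \<alpha> k W \<longleftrightarrow> W \<subseteq> C \<and> card W = k \<and>
     (\<forall>W'. W' \<subseteq> C \<and> card W' = k \<longrightarrow> owa_score C n P w \<alpha> W' \<le> owa_score C n P w \<alpha> W)"

text \<open>w extended by w_{m+1} = 0, and w'_r = w_r - w_{r+1}.\<close>
definition wdiff :: "nat \<Rightarrow> (nat \<Rightarrow> nat) \<Rightarrow> nat \<Rightarrow> real" where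
  "wdiff m w r = real (w r) - (if r + 1 \<le> m then real (w (r + 1)) else 0)"

definition owa_ip_feasible ::
  "'c set \<Rightarrow> nat \<Rightarrow> (nat \<Rightarrow> ('c \<times> 'c) set) \<Rightarrow> nat \<Rightarrow>
   (nat \<Rightarrow> nat \<Rightarrow> nat \<Rightarrow> real) \<Rightarrow> ('c \<Rightarrow> real) \<Rightarrow> bool" where
  "owa_ip_feasible C n P k x y \<longleftrightarrow>
     (\<Sum>c\<in>C. y c) = real k \<and>
     (\<forall>i\<in>{1..n}. \<forall>r\<in>{1..card C}.
        (\<Sum>l\<in>{1..k}. x i l r) \<le> (\<Sum>c\<in>{c \<in> C. rank C (P i) c \<le> r}. y c)) \<and>
     (\<forall>i\<in>{1..n}. \<forall>l\<in>{1..k}. \<forall>r\<in>{1..card C}. x i l r \<in> {0, 1}) \<and>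
     (\<forall>c\<in>C. y c \<in> {0, 1})"

definition owa_ip_objective ::
  "'c set \<Rightarrow> nat \<Rightarrow> (nat \<Rightarrow> nat) \<Rightarrow> (nat \<Rightarrow> real) \<Rightarrow> nat \<Rightarrow>
   (nat \<Rightarrow> nat \<Rightarrow> nat \<Rightarrow> real) \<Rightarrow> real" where
  "owa_ip_objective C n w \<alpha> k x =
     (\<Sum>i\<in>{1..n}. \<Sum>l\<in>{1..k}. \<Sum>r\<in>{1..card C}. \<alpha> l * wdiff (card C) w r * x i l r)"

definition owa_ip_optimal ::
  "'c set \<Rightarrow> nat \<Rightarrow> (nat \<Rightarrow> ('c \<times> 'c) set) \<Rightarrow> (nat \<Rightarrow> nat) \<Rightarrow> (nat \<Rightarrow> real) \<Rightarrow> nat \<Rightarrow>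
   (nat \<Rightarrow> nat \<Rightarrow> nat \<Rightarrow> real) \<Rightarrow> ('c \<Rightarrow> real) \<Rightarrow> bool" where
  "owa_ip_optimal C n P w \<alpha> k x y \<longleftrightarrow> owa_ip_feasible C n P k x y \<and>
     (\<forall>x' y'. owa_ip_feasible C n P k x' y' \<longrightarrow>
        owa_ip_objective C n w \<alpha> k x' \<le> owa_ip_objective C n w \<alpha> k x)"

end

theory Submission imports Defs begin

lemma w_mono:
  fixes w :: "nat \<Rightarrow> nat" and m a b :: nat
  assumes "\<forall>r. 1 \<le> r \<and> r < m \<longrightarrow> w (r + 1) \<le> (w r::nat)"
    and "1 \<le> a" "a \<le> b" "b \<le> m"
  shows "w b \<le> w a"
  using assms(2-)
proof (induction b)
  case 0 then show ?case by simp
next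
  case (Suc b)
  show ?case
  proof (cases "a = Suc b")
    case False
    then have "a \<le> b" using Suc by simp
    then have "w b \<le> w a" using Suc by simp
    moreover have "w (b+1) \<le> w b" using assms Suc \<open>a \<le> b\<close> by simp
    ultimately show ?thesis by simp
  qed simp
qed

lemma alpha_mono:
  fixes \<alpha> :: "nat \<Rightarrow> real" and k a b :: nat
  assumes "\<forall>l. 1 \<le> l \<and> l < k \<longrightarrow> \<alpha> (l + 1) \<le> (\<alpha> l::real)"
    and "1 \<le> a" "a \<le> b" "b \<le> k"
  shows "\<alpha> b \<le> \<alpha> a"
  using assms(2-)
proof (induction b)
  case 0 then show ?case by simp
next
  case (Suc b)
  show ?case
  proof (cases "a = Suc b")
    case False
    then have "a \<le> b" using Suc by simp
    then have "\<alpha> b \<le> \<alpha> a" using Suc by simp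
    moreover have "\<alpha> (b+1) \<le> \<alpha> b" using assms Suc \<open>a \<le> b\<close> by simp
    ultimately show ?thesis by simp
  qed simp
qed

lemma wdiff_telescope:
  assumes "1 \<le> t" "t \<le> m"
  shows "(\<Sum>r\<in>{1..m}. wdiff m w r * (if t \<le> r then 1 else 0)) = real (w t)"
proof -
  define h where "h r = (if r \<le> m then real (w r) else 0)" for r
  have "(\<Sum>r\<in>{1..m}. wdiff m w r * (if t \<le> r then 1 else 0)) = (\<Sum>r\<in>{t..m}. wdiff m w r)"
  proof -
    have "(\<Sum>r\<in>{1..m}. wdiff m w r * (if t \<le> r then 1 else 0)) = (\<Sum>r\<in>{1..m}. if t \<le> r then wdiff m w r else 0)"
      by (rule sum.cong) auto
    also have "\<dots> = sum (wdiff m w) {r\<in>{1..m}. t \<le> r}" by (rule sum.inter_filter[symmetric]) simp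
    also have "{r\<in>{1..m}. t \<le> r} = {t..m}" using assms by auto
    finally show ?thesis .
  qed
  also have "\<dots> = (\<Sum>r\<in>{t..m}. -(h (Suc r) - h r))"
    by (rule sum.cong) (auto simp: wdiff_def h_def)
  also have "\<dots> = -(\<Sum>r\<in>{t..m}. h (Suc r) - h r)" by (rule sum_negf)
  also have "\<dots> = - (h (Suc m) - h t)"
    using assms by (subst sum_Suc_diff) auto
  also have "\<dots> = real (w t)" using assms by (simp add: h_def)
  finally show ?thesis .
qed

lemma subset_sum_le:
  assumes mono: "\<forall>l. 1 \<le> l \<and> l < k \<longrightarrow> \<alpha> (l + 1) \<le> (\<alpha> l::real)" and nn: "0 \<le> \<alpha> k"
  shows "k' \<le> k \<Longrightarrow> S \<subseteq> {1..k'} \<Longrightarrow> card S \<le> N \<Longrightarrow> sum \<alpha> S \<le> sum \<alpha> {1..min k' N}"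
proof (induction k' arbitrary: S N)
  case 0 then show ?case by simp
next
  case (Suc k')
  have pos: "\<And>l. 1 \<le> l \<Longrightarrow> l \<le> k \<Longrightarrow> 0 \<le> \<alpha> l"
    using alpha_mono[OF mono] nn by (metis order_trans order_refl)
  show ?case
  proof (cases "Suc k' \<in> S")
    case False
    then have "S \<subseteq> {1..k'}" using Suc.prems by (auto simp: le_Suc_eq)
    then have "sum \<alpha> S \<le> sum \<alpha> {1..min k' N}" using Suc by simp
    also have "\<dots> \<le> sum \<alpha> {1..min (Suc k') N}"
      apply (rule sum_mono2) using Suc.prems pos by auto
    finally show ?thesis .
  next
    case True
    define S' where "S' = S - {Suc k'}"
    have fin: "finite S" using Suc.prems finite_subset by blast
    have S': "S' \<subseteq> {1..k'}" using Suc.prems by (auto simp: S'_def le_Suc_eq)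
    have cS: "card S' = card S - 1" using True fin by (simp add: S'_def)
    have N1: "N \<ge> 1" using True fin Suc.prems card_gt_0_iff[of S] by auto
    have "sum \<alpha> S' \<le> sum \<alpha> {1..min k' (N - 1)}"
      using Suc.IH[OF _ S', of "N - 1"] Suc.prems cS by simp
    moreover have "sum \<alpha> S = \<alpha> (Suc k') + sum \<alpha> S'"
      using True fin by (simp add: S'_def sum.remove)
    moreover have "\<alpha> (Suc k') + sum \<alpha> {1..min k' (N - 1)} \<le> sum \<alpha> {1..min (Suc k') N}"
    proof (cases "N \<ge> Suc k'")
      case True
      then have "min k' (N - 1) = k'" "min (Suc k') N = Suc k'" by auto
      then show ?thesis by simp
    next
      case False
      then have e: "min k' (N - 1) = N - 1" "min (Suc k') N = N" by auto
      have "\<alpha> (Suc k') \<le> \<alpha> N" using alpha_mono[OF mono, of N "Suc k'"] False N1 Suc.prems by simp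
      moreover have "sum \<alpha> {1..N} = sum \<alpha> {1..N-1} + \<alpha> N"
        using N1 by (cases N) (simp_all add: sum.cl_ivl_Suc)
      ultimately show ?thesis using e by simp
    qed
    ultimately show ?thesis by simp
  qed
qed

lemma sorted_filter_len:
  "sorted (rs::nat list) \<Longrightarrow> j < length rs \<Longrightarrow> (rs ! j \<le> r) = (j < length (filter (\<lambda>x. x \<le> r) rs))"
proof (induction rs arbitrary: j)
  case Nil then show ?case by simp
next
  case (Cons a rs)
  show ?case
  proof (cases "a \<le> r")
    case True
    then show ?thesis using Cons by (cases j) auto
  next
    case False
    then have "filter (\<lambda>x. x \<le> r) rs = []" using Cons.prems by (auto simp: filter_empty_conv)
    moreover have "\<not> (a # rs) ! j \<le> r" using Cons.prems False
      by (cases j) (auto, meson Cons.prems(1) nth_mem order_trans sorted_simps(2))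
    ultimately show ?thesis using False by simp
  qed
qed

lemma owa_eq:
  fixes w :: "nat \<Rightarrow> nat" and g :: "'c \<Rightarrow> nat" and \<alpha> :: "nat \<Rightarrow> real" and m :: nat
  assumes wm: "\<forall>r. 1 \<le> r \<and> r < m \<longrightarrow> w (r + 1) \<le> w r"
    and fin: "finite W" and gr: "\<forall>c\<in>W. 1 \<le> g c \<and> g c \<le> m"
  shows "owa \<alpha> W (\<lambda>c. real (w (g c))) =
    (\<Sum>r\<in>{1..m}. wdiff m w r * (\<Sum>l\<in>{1..card W}. if l \<le> card {c\<in>W. g c \<le> r} then \<alpha> l else 0))"
proof -
  define M where "M = image_mset g (mset_set W)"
  define rs where "rs = sorted_list_of_multiset M"
  have mrs: "mset rs = M" by (simp add: rs_def)
  have srt: "sorted rs" by (simp add: rs_def)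
  have len: "length rs = card W"
    by (metis mrs M_def size_mset size_image_mset size_mset_set)
  have setrs: "set rs = g ` W"
    by (metis mrs M_def set_mset_mset set_image_mset finite_set_mset_mset_set fin)
  have rng: "\<And>j. j < length rs \<Longrightarrow> 1 \<le> rs ! j \<and> rs ! j \<le> m"
    using setrs gr by (metis imageE nth_mem)
  define L where "L = map (\<lambda>r. real (w r)) rs"
  have mL: "image_mset (\<lambda>c. real (w (g c))) (mset_set W) = mset L"
    by (simp add: L_def mrs M_def image_mset.compositionality comp_def)
  have sL: "sorted (rev L)"
    unfolding sorted_rev_iff_nth_mono
  proof (intro allI impI)
    fix i j assume ij: "i \<le> j" "j < length L"
    then have "rs ! i \<le> rs ! j" using srt by (simp add: L_def sorted_nth_mono)
    then have "w (rs ! j) \<le> w (rs ! i)"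
      using w_mono[OF wm, of "rs ! i" "rs ! j"] rng ij by (simp add: L_def)
    then show "L ! j \<le> L ! i" using ij by (simp add: L_def)
  qed
  have xs: "rev (sorted_list_of_multiset (image_mset (\<lambda>c. real (w (g c))) (mset_set W))) = L"
  proof -
    have "sorted_list_of_multiset (mset L) = sorted_list_of_multiset (mset (rev L))" by simp
    also have "\<dots> = rev L" using sL by (simp only: sorted_list_of_multiset_mset sorted_sort_id)
    finally show ?thesis using mL by simp
  qed
  have cnt: "\<And>r. length (filter (\<lambda>x. x \<le> r) rs) = card {c\<in>W. g c \<le> r}"
  proof -
    fix r
    have "length (filter (\<lambda>x. x \<le> r) rs) = size (filter_mset (\<lambda>x. x \<le> r) (mset rs))"
      by (metis mset_filter size_mset)
    also have "\<dots> = card {c\<in>W. g c \<le> r}"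
      using fin by (simp add: mrs M_def filter_mset_image_mset)
    finally show "length (filter (\<lambda>x. x \<le> r) rs) = card {c\<in>W. g c \<le> r}" .
  qed
  have "owa \<alpha> W (\<lambda>c. real (w (g c))) = (\<Sum>j<card W. \<alpha> (Suc j) * L ! j)"
    unfolding owa_def Let_def xs ..
  also have "\<dots> = (\<Sum>j<card W. \<Sum>r\<in>{1..m}. wdiff m w r * (if rs ! j \<le> r then \<alpha> (Suc j) else 0))"
  proof (rule sum.cong)
    fix j assume "j \<in> {..<card W}"
    then have j: "j < length rs" using len by simp
    have "L ! j = (\<Sum>r\<in>{1..m}. wdiff m w r * (if rs ! j \<le> r then 1 else 0))"
      using wdiff_telescope[of "rs ! j" m w] rng[OF j] j by (simp add: L_def)
    show "\<alpha> (Suc j) * L ! j = (\<Sum>r\<in>{1..m}. wdiff m w r * (if rs ! j \<le> r then \<alpha> (Suc j) else 0))"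
      unfolding \<open>L ! j = _\<close> sum_distrib_left by (intro sum.cong) auto
  qed simp
  also have "\<dots> = (\<Sum>r\<in>{1..m}. \<Sum>j<card W. wdiff m w r * (if rs ! j \<le> r then \<alpha> (Suc j) else 0))"
    by (rule sum.swap)
  also have "\<dots> = (\<Sum>r\<in>{1..m}. wdiff m w r * (\<Sum>l\<in>{1..card W}. if l \<le> card {c\<in>W. g c \<le> r} then \<alpha> l else 0))"
  proof (rule sum.cong)
    fix r assume "r \<in> {1..m}"
    have "(\<Sum>l\<in>{1..card W}. if l \<le> card {c\<in>W. g c \<le> r} then \<alpha> l else 0)
        = (\<Sum>j<card W. if Suc j \<le> card {c\<in>W. g c \<le> r} then \<alpha> (Suc j) else 0)"
      using sum.atLeast1_atMost_eq[of "\<lambda>l. if l \<le> card {c\<in>W. g c \<le> r} then \<alpha> l else 0"] by simp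
    also have "\<dots> = (\<Sum>j<card W. if rs ! j \<le> r then \<alpha> (Suc j) else 0)"
    proof (rule sum.cong)
      fix j assume "j \<in> {..<card W}"
      then have "j < length rs" using len by simp
      then have "(rs ! j \<le> r) = (Suc j \<le> card {c\<in>W. g c \<le> r})"
        using sorted_filter_len[OF srt] cnt by (simp add: Suc_le_eq)
      then show "(if Suc j \<le> card {c\<in>W. g c \<le> r} then \<alpha> (Suc j) else 0) = (if rs ! j \<le> r then \<alpha> (Suc j) else 0)"
        by simp
    qed simp
    finally show "(\<Sum>j<card W. wdiff m w r * (if rs ! j \<le> r then \<alpha> (Suc j) else 0)) =
      wdiff m w r * (\<Sum>l\<in>{1..card W}. if l \<le> card {c\<in>W. g c \<le> r} then \<alpha> l else 0)"
      by (simp add: sum_distrib_left)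
  qed simp
  finally show ?thesis .
qed

lemma rank_bounds:
  assumes "finite C" "weak_order C R" "c \<in> C"
  shows "1 \<le> rank C R c \<and> rank C R c \<le> card C"
proof -
  let ?D = "{d \<in> C. (d, c) \<in> R}"
  have "c \<in> ?D" using assms unfolding weak_order_def refl_on_def by auto
  have finD: "finite ?D" using assms by simp
  have "card ((\<lambda>d. {e \<in> C. (e, d) \<in> R}) ` ?D) \<ge> 1"
    using \<open>c \<in> ?D\<close> finD by (metis (no_types, lifting) One_nat_def Suc_leI card_gt_0_iff empty_iff finite_imageI image_eqI)
  moreover have "card ((\<lambda>d. {e \<in> C. (e, d) \<in> R}) ` ?D) \<le> card C"
  proof -
    have "?D \<subseteq> C" by auto
    from order_trans[OF card_image_le[OF finD] card_mono[OF assms(1) this]] show ?thesis .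
  qed
  ultimately show ?thesis unfolding rank_def by simp
qed

lemma ysum:
  assumes "finite A" "\<forall>c\<in>A. y c \<in> {0, 1::real}"
  shows "(\<Sum>c\<in>A. y c) = real (card {c\<in>A. y c = 1})"
proof -
  have "(\<Sum>c\<in>A. y c) = (\<Sum>c\<in>A. if y c = 1 then 1 else 0)"
    using assms by (intro sum.cong) auto
  also have "\<dots> = sum (\<lambda>_. 1) {c\<in>A. y c = 1}"
    using sum.inter_filter[OF assms(1), of "\<lambda>_. 1::real" "\<lambda>c. y c = 1"] by simp
  finally show ?thesis by simp
qed

lemma B_bound:
  assumes mono: "\<forall>l. 1 \<le> l \<and> l < k \<longrightarrow> \<alpha> (l + 1) \<le> (\<alpha> l::real)" and nn: "0 \<le> \<alpha> k"
    and xb: "\<forall>l\<in>{1..k}. x l \<in> {0, 1::real}" and xs: "(\<Sum>l\<in>{1..k}. x l) \<le> real N"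
  shows "(\<Sum>l\<in>{1..k}. \<alpha> l * x l) \<le> (\<Sum>l\<in>{1..k}. if l \<le> N then \<alpha> l else 0)"
proof -
  define S where "S = {l\<in>{1..k}. x l = 1}"
  have "(\<Sum>l\<in>{1..k}. \<alpha> l * x l) = (\<Sum>l\<in>{1..k}. if x l = 1 then \<alpha> l else 0)"
    using xb by (intro sum.cong) auto
  also have "\<dots> = sum \<alpha> S" using sum.inter_filter[of "{1..k}" \<alpha> "\<lambda>l. x l = 1"] by (simp add: S_def)
  finally have e1: "(\<Sum>l\<in>{1..k}. \<alpha> l * x l) = sum \<alpha> S" .
  have "card S \<le> N" using ysum[of "{1..k}" x] xb xs by (simp add: S_def)
  moreover have "S \<subseteq> {1..k}" by (auto simp: S_def)
  ultimately have "sum \<alpha> S \<le> sum \<alpha> {1..min k N}"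
    using subset_sum_le[OF mono nn order_refl] by blast
  also have "sum \<alpha> {1..min k N} = (\<Sum>l\<in>{1..k}. if l \<le> N then \<alpha> l else 0)"
  proof -
    have "(\<Sum>l\<in>{1..k}. if l \<le> N then \<alpha> l else 0) = sum \<alpha> {l\<in>{1..k}. l \<le> N}"
      using sum.inter_filter[of "{1..k}" \<alpha> "\<lambda>l. l \<le> N"] by simp
    also have "{l\<in>{1..k}. l \<le> N} = {1..min k N}" by auto
    finally show ?thesis by simp
  qed
  finally show ?thesis using e1 by simp
qed

lemma obj_rewrite:
  "owa_ip_objective C n w \<alpha> k x = (\<Sum>i\<in>{1..n}. \<Sum>r\<in>{1..card C}. wdiff (card C) w r * (\<Sum>l\<in>{1..k}. \<alpha> l * x i l r))"
  unfolding owa_ip_objective_def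
  apply (rule sum.cong, simp)
  apply (subst sum.swap)
  apply (rule sum.cong, simp)
  apply (simp add: sum_distrib_left mult.commute mult.left_commute)
  done

theorem mainTheorem6:
  fixes C :: "'c set" and n m k :: nat and P :: "nat \<Rightarrow> ('c \<times> 'c) set"
    and w :: "nat \<Rightarrow> nat" and \<alpha> :: "nat \<Rightarrow> real"
  assumes "finite C" and "card C = m"
    and "\<forall>i\<in>{1..n}. weak_order C (P i)"
    and "0 < k" and "k \<le> m"
    and "\<forall>r. 1 \<le> r \<and> r < m \<longrightarrow> w (r + 1) \<le> w r"
    and "\<forall>l. 1 \<le> l \<and> l < k \<longrightarrow> \<alpha> (l + 1) \<le> \<alpha> l"
    and "0 \<le> \<alpha> k"
  shows "(\<exists>x y. owa_ip_optimal C n P w \<alpha> k x y) \<and>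
    (\<forall>x y. owa_ip_optimal C n P w \<alpha> k x y \<longrightarrow>
       owa_ip_objective C n w \<alpha> k x =
         Max ((owa_score C n P w \<alpha>) ` {W. W \<subseteq> C \<and> card W = k}) \<and>
       optimal_committee C n P w \<alpha> k {c \<in> C. y c = 1})"
proof -
  note finC = assms(1) and cardC = assms(2) and wo = assms(3) and wm = assms(6)
    and am = assms(7) and an = assms(8)
  define B where "B N = (\<Sum>l\<in>{1..k}. if l \<le> N then \<alpha> l else 0)" for N
  define Nc where "Nc i W r = card {c\<in>W. rank C (P i) c \<le> r}" for i W r
  define F where "F W = (\<Sum>i\<in>{1..n}. \<Sum>r\<in>{1..m}. wdiff m w r * B (Nc i W r))" for W
  define S where "S = owa_score C n P w \<alpha>"
  define Ws where "Ws = {W. W \<subseteq> C \<and> card W = k}"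
  have wdnn: "\<And>r. r \<in> {1..m} \<Longrightarrow> 0 \<le> wdiff m w r"
  proof -
    fix r assume r: "r \<in> {1..m}"
    show "0 \<le> wdiff m w r"
    proof (cases "r + 1 \<le> m")
      case True
      then have "w (r + 1) \<le> w r" using wm r by simp
      then show ?thesis using True by (simp add: wdiff_def)
    qed (simp add: wdiff_def)
  qed
  have scoreF: "S W = F W" if "W \<subseteq> C" "card W = k" for W
  proof -
    have finW: "finite W" using that finC finite_subset by blast
    show ?thesis
      unfolding S_def owa_score_def F_def
    proof (rule sum.cong)
      fix i assume i: "i \<in> {1..n}"
      have "\<forall>c\<in>W. 1 \<le> rank C (P i) c \<and> rank C (P i) c \<le> m"
      proof
        fix c assume "c \<in> W"
        then have "c \<in> C" using that by blast
        from rank_bounds[OF finC bspec[OF wo i] this] cardC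
        show "1 \<le> rank C (P i) c \<and> rank C (P i) c \<le> m" by simp
      qed
      from owa_eq[OF wm finW this, of \<alpha>]
      show "owa \<alpha> W (\<lambda>c. real (w (rank C (P i) c))) = (\<Sum>r\<in>{1..m}. wdiff m w r * B (Nc i W r))"
        using that by (simp add: B_def Nc_def)
    qed simp
  qed
  have objle: "owa_ip_objective C n w \<alpha> k x \<le> F {c\<in>C. y c = 1}
      \<and> {c\<in>C. y c = 1} \<subseteq> C \<and> card {c\<in>C. y c = 1} = k"
    if fe: "owa_ip_feasible C n P k x y" for x y
  proof -
    let ?W = "{c\<in>C. y c = 1}"
    have yb: "\<forall>c\<in>C. y c \<in> {0, 1}" using fe by (simp add: owa_ip_feasible_def)
    have ck: "card ?W = k"
      using fe ysum[OF finC yb] by (simp add: owa_ip_feasible_def)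
    have "owa_ip_objective C n w \<alpha> k x = (\<Sum>i\<in>{1..n}. \<Sum>r\<in>{1..m}. wdiff m w r * (\<Sum>l\<in>{1..k}. \<alpha> l * x i l r))"
      by (simp only: obj_rewrite cardC)
    also have "\<dots> \<le> F ?W"
      unfolding F_def
    proof (intro sum_mono mult_left_mono)
      fix i r assume i: "i \<in> {1..n}" and r: "r \<in> {1..m}"
      show "0 \<le> wdiff m w r" using wdnn r .
      have xb: "\<forall>l\<in>{1..k}. x i l r \<in> {0, 1}" using fe i r cardC by (simp add: owa_ip_feasible_def)
      have "(\<Sum>l\<in>{1..k}. x i l r) \<le> (\<Sum>c\<in>{c \<in> C. rank C (P i) c \<le> r}. y c)"
        using fe i r cardC by (simp add: owa_ip_feasible_def)
      also have "\<dots> = real (card {c\<in>{c \<in> C. rank C (P i) c \<le> r}. y c = 1})"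
        using yb finC by (intro ysum) auto
      also have "{c\<in>{c \<in> C. rank C (P i) c \<le> r}. y c = 1} = {c\<in>?W. rank C (P i) c \<le> r}" by auto
      finally have "(\<Sum>l\<in>{1..k}. x i l r) \<le> real (Nc i ?W r)" by (simp add: Nc_def)
      from B_bound[OF am an xb this]
      show "(\<Sum>l\<in>{1..k}. \<alpha> l * x i l r) \<le> B (Nc i ?W r)" by (simp add: B_def)
    qed
    finally show ?thesis using ck by auto
  qed
  define xs where "xs (W::'c set) i l r = (if l \<le> Nc i W r then 1 else 0::real)" for W i l r
  define ys where "ys (W::'c set) (c::'c) = (if c \<in> W then 1 else 0::real)" for W c
  have star: "owa_ip_feasible C n P k (xs W) (ys W) \<and> owa_ip_objective C n w \<alpha> k (xs W) = F W"
    if W: "W \<subseteq> C" "card W = k" for W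
  proof
    have yb: "\<forall>c\<in>C. ys W c \<in> {0, 1}" by (simp add: ys_def)
    have yW: "\<And>A. A \<subseteq> C \<Longrightarrow> {c\<in>A. ys W c = 1} = A \<inter> W" by (auto simp: ys_def)
    have sumC: "(\<Sum>c\<in>C. ys W c) = real k"
      using ysum[OF finC yb] yW[of C] W by (simp add: Int_absorb1)
    have cons: "(\<Sum>l\<in>{1..k}. xs W i l r) \<le> (\<Sum>c\<in>{c \<in> C. rank C (P i) c \<le> r}. ys W c)" for i r
    proof -
      have "(\<Sum>l\<in>{1..k}. xs W i l r) = real (card {l\<in>{1..k}. l \<le> Nc i W r})"
        by (simp add: xs_def sum.If_cases Int_def)
      also have "\<dots> \<le> real (Nc i W r)"
      proof -
        have "card {l\<in>{1..k}. l \<le> Nc i W r} \<le> card {1..Nc i W r}" by (rule card_mono) auto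
        then show ?thesis by simp
      qed
      also have "real (Nc i W r) = (\<Sum>c\<in>{c \<in> C. rank C (P i) c \<le> r}. ys W c)"
      proof -
        have "(\<Sum>c\<in>{c \<in> C. rank C (P i) c \<le> r}. ys W c) = real (card {c\<in>{c \<in> C. rank C (P i) c \<le> r}. ys W c = 1})"
          using finC yb by (intro ysum) auto
        also have "{c\<in>{c \<in> C. rank C (P i) c \<le> r}. ys W c = 1} = {c\<in>W. rank C (P i) c \<le> r}"
          using W by (auto simp: ys_def)
        finally show ?thesis by (simp add: Nc_def)
      qed
      finally show ?thesis .
    qed
    show "owa_ip_feasible C n P k (xs W) (ys W)"
      unfolding owa_ip_feasible_def
    proof (intro conjI ballI)
      show "(\<Sum>c\<in>C. ys W c) = real k" by (rule sumC)
    next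
      fix i r show "(\<Sum>l\<in>{1..k}. xs W i l r) \<le> (\<Sum>c\<in>{c \<in> C. rank C (P i) c \<le> r}. ys W c)" by (rule cons)
    next
      fix i l r show "xs W i l r \<in> {0, 1}" by (simp add: xs_def)
    next
      fix c assume "c \<in> C" then show "ys W c \<in> {0, 1}" using yb by blast
    qed
    show "owa_ip_objective C n w \<alpha> k (xs W) = F W"
      unfolding obj_rewrite F_def cardC
    proof (intro sum.cong refl)
      fix i r
      show "wdiff m w r * (\<Sum>l\<in>{1..k}. \<alpha> l * xs W i l r) = wdiff m w r * B (Nc i W r)"
        unfolding B_def xs_def by (intro arg_cong[where f="\<lambda>z. wdiff m w r * z"] sum.cong) auto
    qed
  qed
  have finWs: "finite Ws" unfolding Ws_def using finC by (metis (no_types, lifting) Collect_mono finite_Collect_subsets rev_finite_subset)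
  obtain W1 where "W1 \<subseteq> C" "card W1 = k" using obtain_subset_with_card_n[of k C] assms(5) cardC by metis
  then have neWs: "Ws \<noteq> {}" by (auto simp: Ws_def)
  obtain W0 where W0: "W0 \<in> Ws" "S W0 = Max (S ` Ws)"
  proof -
    have "Max (S ` Ws) \<in> S ` Ws" using finWs neWs by (intro Max_in) auto
    then show ?thesis using that by (auto simp del: Max_in)
  qed
  have Mge: "S W \<le> Max (S ` Ws)" if "W \<in> Ws" for W using finWs that by simp
  have W0C: "W0 \<subseteq> C" "card W0 = k" using W0(1) by (auto simp: Ws_def)
  have W0F: "F W0 = Max (S ` Ws)" using W0(2) scoreF[OF W0C] by simp
  have st0: "owa_ip_feasible C n P k (xs W0) (ys W0)" "owa_ip_objective C n w \<alpha> k (xs W0) = F W0"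
    using star[OF W0C] by auto
  have objMax: "owa_ip_objective C n w \<alpha> k x \<le> Max (S ` Ws)"
    and inWs: "{c\<in>C. y c = 1} \<in> Ws"
    and objS: "owa_ip_objective C n w \<alpha> k x \<le> S {c\<in>C. y c = 1}"
    if "owa_ip_feasible C n P k x y" for x y
  proof -
    from objle[OF that] have a: "owa_ip_objective C n w \<alpha> k x \<le> F {c\<in>C. y c = 1}"
      and b: "{c\<in>C. y c = 1} \<subseteq> C" "card {c\<in>C. y c = 1} = k" by auto
    have c: "F {c\<in>C. y c = 1} = S {c\<in>C. y c = 1}" using scoreF[OF b] by simp
    show "{c\<in>C. y c = 1} \<in> Ws" using b by (simp add: Ws_def)
    then have "S {c\<in>C. y c = 1} \<le> Max (S ` Ws)" by (rule Mge)
    then show "owa_ip_objective C n w \<alpha> k x \<le> Max (S ` Ws)" using a c by linarith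
    show "owa_ip_objective C n w \<alpha> k x \<le> S {c\<in>C. y c = 1}" using a c by linarith
  qed
  have opt0: "owa_ip_optimal C n P w \<alpha> k (xs W0) (ys W0)"
    unfolding owa_ip_optimal_def
  proof (intro conjI allI impI)
    show "owa_ip_feasible C n P k (xs W0) (ys W0)" by (rule st0(1))
    fix x' y' assume "owa_ip_feasible C n P k x' y'"
    from objMax[OF this] show "owa_ip_objective C n w \<alpha> k x' \<le> owa_ip_objective C n w \<alpha> k (xs W0)"
      using st0(2) W0F by simp
  qed
  show ?thesis
  proof (intro conjI allI impI)
    show "\<exists>x y. owa_ip_optimal C n P w \<alpha> k x y" using opt0 by blast
  next
    fix x y assume op: "owa_ip_optimal C n P w \<alpha> k x y"
    have fe: "owa_ip_feasible C n P k x y" using op unfolding owa_ip_optimal_def by (rule conjunct1)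
    have "\<forall>x' y'. owa_ip_feasible C n P k x' y' \<longrightarrow>
        owa_ip_objective C n w \<alpha> k x' \<le> owa_ip_objective C n w \<alpha> k x"
      using op unfolding owa_ip_optimal_def by (rule conjunct2)
    then have "owa_ip_objective C n w \<alpha> k (xs W0) \<le> owa_ip_objective C n w \<alpha> k x"
      using st0(1) by blast
    then have ge: "Max (S ` Ws) \<le> owa_ip_objective C n w \<alpha> k x" using st0(2) W0F by simp
    have le: "owa_ip_objective C n w \<alpha> k x \<le> S {c\<in>C. y c = 1}" by (rule objS[OF fe])
    have inW: "{c\<in>C. y c = 1} \<in> Ws" by (rule inWs[OF fe])
    have "S {c\<in>C. y c = 1} \<le> Max (S ` Ws)" using Mge inW .
    then have eq: "owa_ip_objective C n w \<alpha> k x = Max (S ` Ws)" "S {c\<in>C. y c = 1} = Max (S ` Ws)"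
      using ge le by linarith+
    show "owa_ip_objective C n w \<alpha> k x = Max (owa_score C n P w \<alpha> ` {W. W \<subseteq> C \<and> card W = k})"
      using eq(1) unfolding S_def Ws_def .
    show "optimal_committee C n P w \<alpha> k {c \<in> C. y c = 1}"
      unfolding optimal_committee_def
    proof (intro conjI allI impI)
      show "{c \<in> C. y c = 1} \<subseteq> C" "card {c \<in> C. y c = 1} = k" using inW by (auto simp: Ws_def)
      fix W' assume "W' \<subseteq> C \<and> card W' = k"
      then have "W' \<in> Ws" by (simp add: Ws_def)
      from Mge[OF this] eq(2) show "owa_score C n P w \<alpha> W' \<le> owa_score C n P w \<alpha> {c \<in> C. y c = 1}"
        by (simp add: S_def)
    qed
  qed
qed

end
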